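(* Every $A \in \overline{\square}_\vee$ is a retract in $\mathbf{SLat}$ of $[1]^n$ for some $n \in \mathbb{N}$.
   Context: $\mathbf{SLat}$ is the category of (join-)semilattices—sets with an associative, commutative, idempotent binary operation $\vee$—and homomorphisms preserving $\vee$ (not necessarily preserving bounds or meets). Each semilattice is a poset via $x\le y\iff x\vee y=y$. $\overline{\square}_\vee$ is the full subcategory of $\mathbf{SLat}$ on the finite inhabited semilattices whose induced poset is a distributive lattice. $[1]=\{0<1\}$ with $\vee=\max$, and $[1]^n$ has the pointwise structure. *)

theory Defs
  imports Main
begin

definition semilattice_on :: "'a set \<Rightarrow> ('a \<Rightarrow> 'a \<Rightarrow> 'a) \<Rightarrow> bool" where
  "semilattice_on A j \<longleftrightarrow>
     (\<forall>x\<in>A. \<forall>y\<in>A. j x y \<in> A) \<and>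
     (\<forall>x\<in>A. \<forall>y\<in>A. \<forall>z\<in>A. j (j x y) z = j x (j y z)) \<and>
     (\<forall>x\<in>A. \<forall>y\<in>A. j x y = j y x) \<and>
     (\<forall>x\<in>A. j x x = x)"

definition sl_le :: "('a \<Rightarrow> 'a \<Rightarrow> 'a) \<Rightarrow> 'a \<Rightarrow> 'a \<Rightarrow> bool" where
  "sl_le j x y \<longleftrightarrow> j x y = y"

definition sl_is_glb :: "'a set \<Rightarrow> ('a \<Rightarrow> 'a \<Rightarrow> 'a) \<Rightarrow> 'a \<Rightarrow> 'a \<Rightarrow> 'a \<Rightarrow> bool" where
  "sl_is_glb A j x y m \<longleftrightarrow> m \<in> A \<and> sl_le j m x \<and> sl_le j m y \<and>
     (\<forall>z\<in>A. sl_le j z x \<and> sl_le j z y \<longrightarrow> sl_le j z m)"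

text \<open>The induced poset is a distributive lattice: binary meets (glbs) exist
  (joins are lubs automatically), and meet distributes over join.\<close>
definition distrib_lattice_poset :: "'a set \<Rightarrow> ('a \<Rightarrow> 'a \<Rightarrow> 'a) \<Rightarrow> bool" where
  "distrib_lattice_poset A j \<longleftrightarrow>
     (\<exists>m. (\<forall>x\<in>A. \<forall>y\<in>A. sl_is_glb A j x y (m x y)) \<and>
          (\<forall>x\<in>A. \<forall>y\<in>A. \<forall>z\<in>A. m x (j y z) = j (m x y) (m x z)))"

definition in_box_vee :: "'a set \<Rightarrow> ('a \<Rightarrow> 'a \<Rightarrow> 'a) \<Rightarrow> bool" where
  "in_box_vee A j \<longleftrightarrow> semilattice_on A j \<and> finite A \<and> A \<noteq> {} \<and> distrib_lattice_poset A j"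

definition sl_hom :: "'a set \<Rightarrow> ('a \<Rightarrow> 'a \<Rightarrow> 'a) \<Rightarrow> 'b set \<Rightarrow> ('b \<Rightarrow> 'b \<Rightarrow> 'b) \<Rightarrow> ('a \<Rightarrow> 'b) \<Rightarrow> bool" where
  "sl_hom A jA B jB f \<longleftrightarrow> (\<forall>x\<in>A. f x \<in> B) \<and> (\<forall>x\<in>A. \<forall>y\<in>A. f (jA x y) = jB (f x) (f y))"

text \<open>[1]^n: functions nat \<Rightarrow> bool vanishing from n on (False = 0, True = 1), with pointwise max.\<close>
definition cube :: "nat \<Rightarrow> (nat \<Rightarrow> bool) set" where
  "cube n = {f. \<forall>i\<ge>n. f i = False}"

definition cube_join :: "(nat \<Rightarrow> bool) \<Rightarrow> (nat \<Rightarrow> bool) \<Rightarrow> (nat \<Rightarrow> bool)" where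
  "cube_join f g = (\<lambda>i. f i \<or> g i)"

definition sl_retract :: "'a set \<Rightarrow> ('a \<Rightarrow> 'a \<Rightarrow> 'a) \<Rightarrow> 'b set \<Rightarrow> ('b \<Rightarrow> 'b \<Rightarrow> 'b) \<Rightarrow> bool" where
  "sl_retract A jA B jB \<longleftrightarrow>
     (\<exists>s r. sl_hom A jA B jB s \<and> sl_hom B jB A jA r \<and> (\<forall>x\<in>A. r (s x) = x))"

end

theory Submission
  imports Defs
begin

locale dlat =
  fixes A :: "'a set" and j :: "'a \<Rightarrow> 'a \<Rightarrow> 'a" and m :: "'a \<Rightarrow> 'a \<Rightarrow> 'a"
    and a :: "nat \<Rightarrow> 'a" and n :: nat and b :: 'a
  assumes cl: "\<And>x y. x \<in> A \<Longrightarrow> y \<in> A \<Longrightarrow> j x y \<in> A"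
    and asc: "\<And>x y z. x \<in> A \<Longrightarrow> y \<in> A \<Longrightarrow> z \<in> A \<Longrightarrow> j (j x y) z = j x (j y z)"
    and cm: "\<And>x y. x \<in> A \<Longrightarrow> y \<in> A \<Longrightarrow> j x y = j y x"
    and idm: "\<And>x. x \<in> A \<Longrightarrow> j x x = x"
    and glb: "\<And>x y. x \<in> A \<Longrightarrow> y \<in> A \<Longrightarrow> sl_is_glb A j x y (m x y)"
    and dist: "\<And>x y z. x \<in> A \<Longrightarrow> y \<in> A \<Longrightarrow> z \<in> A \<Longrightarrow> m x (j y z) = j (m x y) (m x z)"
    and bij: "bij_betw a {..<n} A"
    and bA: "b \<in> A" and bot: "\<And>x. x \<in> A \<Longrightarrow> j b x = x"
begin

abbreviation le where "le x y \<equiv> j x y = y"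

lemma lcm: "x \<in> A \<Longrightarrow> y \<in> A \<Longrightarrow> z \<in> A \<Longrightarrow> j x (j y z) = j y (j x z)"
  by (metis asc cm)

lemma lid: "x \<in> A \<Longrightarrow> y \<in> A \<Longrightarrow> j x (j x y) = j x y"
  by (metis asc idm)

lemma trans: "x \<in> A \<Longrightarrow> y \<in> A \<Longrightarrow> z \<in> A \<Longrightarrow> le x y \<Longrightarrow> le y z \<Longrightarrow> le x z"
  by (metis asc)

lemma antis: "x \<in> A \<Longrightarrow> y \<in> A \<Longrightarrow> le x y \<Longrightarrow> le y x \<Longrightarrow> x = y"
  by (metis cm)

lemma ub1: "x \<in> A \<Longrightarrow> y \<in> A \<Longrightarrow> le x (j x y)"
  by (metis lid)

lemma ub2: "x \<in> A \<Longrightarrow> y \<in> A \<Longrightarrow> le y (j x y)"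
  by (metis lid cm)

lemma lub: "x \<in> A \<Longrightarrow> y \<in> A \<Longrightarrow> z \<in> A \<Longrightarrow> le x z \<Longrightarrow> le y z \<Longrightarrow> le (j x y) z"
  by (metis asc)

lemma aA: "i < n \<Longrightarrow> a i \<in> A"
  using bij by (auto simp: bij_betw_def)

definition prime where
  "prime p \<longleftrightarrow> (\<forall>y\<in>A. \<forall>z\<in>A. le p (j y z) \<longrightarrow> le p y \<or> le p z)"

definition s where "s x = (\<lambda>i. i < n \<and> prime (a i) \<and> le (a i) x)"

primrec rr :: "nat \<Rightarrow> (nat \<Rightarrow> bool) \<Rightarrow> 'a" where
  "rr 0 S = b"
| "rr (Suc k) S = (if S k then j (a k) (rr k S) else rr k S)"

lemma rrA: "k \<le> n \<Longrightarrow> rr k S \<in> A"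
  by (induction k) (auto simp: bA cl aA)

lemma rr_join: "k \<le> n \<Longrightarrow> rr k (cube_join S T) = j (rr k S) (rr k T)"
proof (induction k)
  case 0 then show ?case by (simp add: idm bA cube_join_def)
next
  case (Suc k)
  then have k: "k < n" "k \<le> n" by auto
  have X: "rr k S \<in> A" "rr k T \<in> A" "a k \<in> A" using rrA aA k by auto
  have IH: "rr k (cube_join S T) = j (rr k S) (rr k T)" using Suc k by auto
  have IH': "rr k (\<lambda>i. S i \<or> T i) = j (rr k S) (rr k T)" using IH by (simp add: cube_join_def)
  show ?case
  proof (cases "S k"; cases "T k")
    assume "S k" "T k" then show ?thesis using X IH'
      by (simp add: cube_join_def) (metis asc cl lcm lid)
  next
    assume "S k" "\<not> T k" then show ?thesis using X IH'
      by (simp add: cube_join_def) (metis asc cl)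
  next
    assume "\<not> S k" "T k" then show ?thesis using X IH'
      by (simp add: cube_join_def) (metis asc cl lcm)
  next
    assume "\<not> S k" "\<not> T k" then show ?thesis using X IH'
      by (simp add: cube_join_def)
  qed
qed

lemma s_hom: "x \<in> A \<Longrightarrow> y \<in> A \<Longrightarrow> s (j x y) = cube_join (s x) (s y)"
proof -
  assume x: "x \<in> A" and y: "y \<in> A"
  have "\<And>i. s (j x y) i = cube_join (s x) (s y) i"
  proof -
    fix i
    show "s (j x y) i = cube_join (s x) (s y) i"
    proof (cases "i < n \<and> prime (a i)")
      case True
      then have ai: "a i \<in> A" using aA by auto
      have "le (a i) (j x y) \<longleftrightarrow> le (a i) x \<or> le (a i) y"
        using True x y ai trans[OF ai x cl[OF x y] _ ub1[OF x y]]
          trans[OF ai y cl[OF x y] _ ub2[OF x y]] unfolding prime_def by blast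
      then show ?thesis using True by (simp add: s_def cube_join_def)
    next
      case False
      then show ?thesis by (auto simp: s_def cube_join_def)
    qed
  qed
  then show ?thesis by blast
qed

definition R where "R x = rr n (s x)"

lemma R_mono: "x \<in> A \<Longrightarrow> y \<in> A \<Longrightarrow> le x y \<Longrightarrow> le (R x) (R y)"
proof -
  assume x: "x \<in> A" and y: "y \<in> A" and le: "le x y"
  have "R y = R (j x y)" using le by simp
  also have "\<dots> = j (R x) (R y)" unfolding R_def by (simp add: s_hom x y rr_join)
  finally show ?thesis by simp
qed

lemma rr_le: "k \<le> n \<Longrightarrow> x \<in> A \<Longrightarrow> le (rr k (s x)) x"
proof (induction k)
  case 0 then show ?case by (simp add: bot)
next
  case (Suc k)
  then have "a k \<in> A" "rr k (s x) \<in> A" using aA rrA by auto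
  with Suc show ?case by (auto simp: s_def intro: lub)
qed

lemma rr_ge: "k \<le> n \<Longrightarrow> i < k \<Longrightarrow> S i \<Longrightarrow> le (a i) (rr k S)"
proof (induction k)
  case 0 then show ?case by simp
next
  case (Suc k)
  then have X: "a k \<in> A" "rr k S \<in> A" "a i \<in> A" using aA rrA by auto
  show ?case
  proof (cases "i = k")
    case True
    then show ?thesis using Suc X ub1 by auto
  next
    case False
    then have "le (a i) (rr k S)" using Suc by auto
    then show ?thesis using X trans[OF X(3) X(2) cl[OF X(1,2)] _ ub2[OF X(1,2)]] by auto
  qed
qed

lemma RA: "R x \<in> A" unfolding R_def by (simp add: rrA)

lemma R_ge: "x \<in> A \<Longrightarrow> le x (R x)"
proof (induction "card {w\<in>A. le w x}" arbitrary: x rule: less_induct)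
  case less
  note x = less.prems
  show ?case
  proof (cases "prime x")
    case True
    obtain i where i: "i < n" "a i = x" using bij x by (auto simp: bij_betw_def)
    then have "s x i" using True x idm by (simp add: s_def)
    then show ?thesis using rr_ge[of n i "s x"] i by (simp add: R_def)
  next
    case False
    then obtain y z where yz: "y \<in> A" "z \<in> A" "le x (j y z)" "\<not> le x y" "\<not> le x z"
      unfolding prime_def by blast
    have small: "\<And>w. w \<in> A \<Longrightarrow> sl_is_glb A j x w (m x w) \<Longrightarrow> \<not> le x w \<Longrightarrow> le (m x w) (R x)"
    proof -
      fix w assume w: "w \<in> A" and g: "sl_is_glb A j x w (m x w)" and nl: "\<not> le x w"
      have mA: "m x w \<in> A" and m1: "le (m x w) x" and m2: "le (m x w) w"
        using g by (auto simp: sl_is_glb_def sl_le_def)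
      have ne: "m x w \<noteq> x" using m2 nl by auto
      have sub: "{v\<in>A. le v (m x w)} \<subset> {v\<in>A. le v x}"
      proof
        show "{v\<in>A. le v (m x w)} \<subseteq> {v\<in>A. le v x}"
          using trans[OF _ mA x _ m1] by auto
        show "{v\<in>A. le v (m x w)} \<noteq> {v\<in>A. le v x}"
          using x idm antis[OF mA x m1] ne by auto
      qed
      have fin: "finite {v\<in>A. le v x}"
        using bij bij_betw_finite by fastforce
      have "card {v\<in>A. le v (m x w)} < card {v\<in>A. le v x}"
        using psubset_card_mono[OF fin sub] .
      then have "le (m x w) (R (m x w))" using less.hyps mA by blast
      moreover have "le (R (m x w)) (R x)" using R_mono[OF mA x m1] .
      ultimately show "le (m x w) (R x)" using trans[OF mA RA RA] by blast
    qed
    have g1: "sl_is_glb A j x y (m x y)" and g2: "sl_is_glb A j x z (m x z)"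
      and g3: "sl_is_glb A j x (j y z) (m x (j y z))"
      using glb x yz cl by auto
    have eq: "m x (j y z) = x"
    proof -
      have "le (m x (j y z)) x" "m x (j y z) \<in> A" using g3 by (auto simp: sl_is_glb_def sl_le_def)
      moreover have "le x (m x (j y z))" using g3 x idm yz(3) by (auto simp: sl_is_glb_def sl_le_def)
      ultimately show ?thesis using antis x by blast
    qed
    have "x = j (m x y) (m x z)" using eq dist[OF x yz(1,2)] by simp
    moreover have "m x y \<in> A" "m x z \<in> A" using g1 g2 by (auto simp: sl_is_glb_def)
    ultimately show ?thesis using lub[OF _ _ RA] small[OF yz(1) g1 yz(4)] small[OF yz(2) g2 yz(5)]
      by metis
  qed
qed

lemma retract: "sl_retract A j (cube n) cube_join"
  unfolding sl_retract_def
proof (intro exI conjI)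
  show "sl_hom A j (cube n) cube_join s"
    using s_hom by (auto simp: sl_hom_def cube_def s_def)
  show "sl_hom (cube n) cube_join A j (rr n)"
    by (auto simp: sl_hom_def rrA rr_join)
  show "\<forall>x\<in>A. rr n (s x) = x"
    using R_ge rr_le antis RA by (metis R_def order_refl)
qed

end

lemma lower_bound:
  assumes "finite F" "F \<noteq> {}" "F \<subseteq> A"
    and cl: "\<And>x y. x \<in> A \<Longrightarrow> y \<in> A \<Longrightarrow> sl_is_glb A j x y (m x y)"
    and tr: "\<And>x y z. x \<in> A \<Longrightarrow> y \<in> A \<Longrightarrow> z \<in> A \<Longrightarrow> j x y = y \<Longrightarrow> j y z = z \<Longrightarrow> j x z = z"
  shows "\<exists>b\<in>A. \<forall>x\<in>F. j b x = x"
  using assms(1-3)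
proof (induction F rule: finite_ne_induct)
  case (singleton x)
  have "sl_is_glb A j x x (m x x)" using cl singleton by auto
  then show ?case by (auto simp: sl_is_glb_def sl_le_def)
next
  case (insert x F)
  then obtain b where b: "b \<in> A" "\<forall>y\<in>F. j b y = y" by auto
  have g: "sl_is_glb A j x b (m x b)" using cl insert b by auto
  then have "m x b \<in> A" "j (m x b) x = x" "j (m x b) b = b" by (auto simp: sl_is_glb_def sl_le_def)
  then show ?case using b tr insert by blast
qed

theorem mainTheorem7:
  fixes A :: "'a set" and j :: "'a \<Rightarrow> 'a \<Rightarrow> 'a"
  assumes "in_box_vee A j"
  shows "\<exists>n::nat. sl_retract A j (cube n) cube_join"
proof -
  from assms have sl: "semilattice_on A j" and fin: "finite A" and ne: "A \<noteq> {}"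
    and dl: "distrib_lattice_poset A j" by (auto simp: in_box_vee_def)
  from dl obtain m where g: "\<forall>x\<in>A. \<forall>y\<in>A. sl_is_glb A j x y (m x y)"
    and d: "\<forall>x\<in>A. \<forall>y\<in>A. \<forall>z\<in>A. m x (j y z) = j (m x y) (m x z)"
    by (auto simp: distrib_lattice_poset_def)
  from sl have cl: "\<And>x y. x \<in> A \<Longrightarrow> y \<in> A \<Longrightarrow> j x y \<in> A"
    and asc: "\<And>x y z. x \<in> A \<Longrightarrow> y \<in> A \<Longrightarrow> z \<in> A \<Longrightarrow> j (j x y) z = j x (j y z)"
    and cm: "\<And>x y. x \<in> A \<Longrightarrow> y \<in> A \<Longrightarrow> j x y = j y x"
    and idm: "\<And>x. x \<in> A \<Longrightarrow> j x x = x"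
    by (auto simp: semilattice_on_def)
  obtain b where b: "b \<in> A" "\<forall>x\<in>A. j b x = x"
    using lower_bound[of A A j m] fin ne g asc by (metis order_refl)
  obtain a where a: "bij_betw a {0..<card A} A" using ex_bij_betw_nat_finite fin by blast
  interpret dlat A j m a "card A" b
    using cl asc cm idm g d a b by unfold_locales (auto simp: atLeast0LessThan)
  show ?thesis using retract by blast
qed

end
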